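(* Let $X$ and $Y$ be Hausdorff topological spaces with no isolated points. Then every topological arc contained in the product space $X\times Y$ has empty interior in $X\times Y$.
   Context: A topological arc is a subset of a topological space that is homeomorphic to $\mathbb{R}$. *)

theory Defs
  imports "HOL-Analysis.Analysis"
begin

end

theory Submission
  imports Defs
begin

lemma prod_minus_point_connected:
  assumes U: "connectedin X U" and V: "connectedin Y V"
    and a: "a \<in> U" "a' \<in> U" "a' \<noteq> a" and b: "b \<in> V" "b' \<in> V" "b' \<noteq> b"
  shows "connectedin (prod_topology X Y) (U \<times> V - {(a,b)})"
proof -
  define M where "M = U \<times> {b'} \<union> {a'} \<times> V"
  have cs: "connectedin X {x}" if "x \<in> U" for x using U that
    by (meson connectedin_sing connectedin_subset_topspace subsetD)
  have ct: "connectedin Y {y}" if "y \<in> V" for y using V that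
    by (meson connectedin_sing connectedin_subset_topspace subsetD)
  have M: "connectedin (prod_topology X Y) M"
    unfolding M_def
    apply (rule connectedin_Un)
    using a b U V cs ct by (auto simp: connectedin_Times)
  define F where "F = {M \<union> ({x} \<times> V) | x. x \<in> U \<and> x \<noteq> a} \<union> {M \<union> (U \<times> {y}) | y. y \<in> V \<and> y \<noteq> b}"
  have "connectedin (prod_topology X Y) (\<Union>F)"
  proof (rule connectedin_Union)
    fix S assume "S \<in> F"
    then show "connectedin (prod_topology X Y) S"
      unfolding F_def
      apply (elim UnE CollectE exE conjE)
      subgoal for x
        apply simp apply (rule connectedin_Un[OF M])
        using a b U V cs ct by (auto simp: connectedin_Times M_def)
      subgoal for y
        apply simp apply (rule connectedin_Un[OF M])
        using a b U V cs ct by (auto simp: connectedin_Times M_def)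
      done
  next
    have "(a',b') \<in> M" using a b by (auto simp: M_def)
    then show "\<Inter>F \<noteq> {}" unfolding F_def by blast
  qed
  moreover have "\<Union>F = U \<times> V - {(a,b)}"
    unfolding F_def M_def using a b by auto
  ultimately show ?thesis by simp
qed

lemma comp_open_nontriv:
  assumes lc: "locally_connected_space (subtopology X U)" and U: "openin X U" and a: "a \<in> U"
    and ni: "\<And>x. x \<in> topspace X \<Longrightarrow> \<not> openin X {x}"
  obtains C a' where "openin X C" "connectedin X C" "C \<subseteq> U" "a \<in> C" "a' \<in> C" "a' \<noteq> a"
proof -
  define C where "C = connected_component_of_set (subtopology X U) a"
  have aX: "a \<in> topspace X" using a openin_subset[OF U] by blast
  have aT: "a \<in> topspace (subtopology X U)" using a aX by simp
  have "openin (subtopology X U) C" unfolding C_def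
    by (rule openin_connected_component_of_locally_connected_space[OF lc])
  then have o: "openin X C" using U openin_trans_full by blast
  have "connectedin (subtopology X U) C" unfolding C_def by (rule connectedin_connected_component_of)
  then have c: "connectedin X C" by (simp add: connectedin_subtopology)
  have aC: "a \<in> C" unfolding C_def using aT by (simp add: connected_component_of_refl)
  have "C \<noteq> {a}"
  proof
    assume "C = {a}"
    with o have "openin X {a}" by simp
    with ni aX show False by blast
  qed
  then obtain a' where a': "a' \<in> C" "a' \<noteq> a" using aC by blast
  have "C \<subseteq> topspace (subtopology X U)" unfolding C_def by (rule connected_component_of_subset_topspace)
  then have CU: "C \<subseteq> U" by simp
  show ?thesis by (rule that[OF o c CU aC a'])
qed

theorem lemma3p5:
  fixes X :: "'a topology" and Y :: "'b topology" and A :: "('a \<times> 'b) set"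
  assumes "Hausdorff_space X" and "Hausdorff_space Y"
    and nX: "\<And>x. x \<in> topspace X \<Longrightarrow> \<not> openin X {x}"
    and nY: "\<And>y. y \<in> topspace Y \<Longrightarrow> \<not> openin Y {y}"
    and AT: "A \<subseteq> topspace (prod_topology X Y)"
    and hom: "subtopology (prod_topology X Y) A homeomorphic_space euclideanreal"
  shows "(prod_topology X Y) interior_of A = {}"
proof (rule ccontr)
  let ?P = "prod_topology X Y"
  assume "?P interior_of A \<noteq> {}"
  then obtain a b where ab: "(a,b) \<in> ?P interior_of A" by auto
  have oI: "openin ?P (?P interior_of A)" by simp
  have "\<exists>U V. openin X U \<and> openin Y V \<and> a \<in> U \<and> b \<in> V \<and> U \<times> V \<subseteq> ?P interior_of A"
    using openin_prod_topology_alt[THEN iffD1, OF oI, rule_format, OF ab] .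
  then obtain U V where UV: "openin X U" "openin Y V" "a \<in> U" "b \<in> V" "U \<times> V \<subseteq> ?P interior_of A"
    by (elim exE conjE)
  have UVA: "U \<times> V \<subseteq> A" by (rule subset_trans[OF UV(5) interior_of_subset])
  have oUV: "openin ?P (U \<times> V)" using UV by (simp add: openin_prod_Times_iff)
  have lcA: "locally_connected_space (subtopology ?P A)"
    using hom homeomorphic_locally_connected_space locally_connected_space_euclideanreal by blast
  have oA: "openin (subtopology ?P A) (U \<times> V)"
    using oUV UVA by (metis inf.absorb_iff2 openin_subtopology_Int2)
  have "locally_connected_space (subtopology (subtopology ?P A) (U \<times> V))"
    using locally_connected_space_open_subset[OF lcA oA] .
  then have "locally_connected_space (prod_topology (subtopology X U) (subtopology Y V))"
    using UVA by (simp add: subtopology_subtopology subtopology_Times Int_absorb1 inf.absorb2)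
  moreover have "prod_topology (subtopology X U) (subtopology Y V) \<noteq> trivial_topology"
  proof -
    have "a \<in> topspace X" "b \<in> topspace Y" using UV openin_subset by blast+
    then have "(a,b) \<in> topspace (prod_topology (subtopology X U) (subtopology Y V))"
      using UV by simp
    then show ?thesis by force
  qed
  ultimately have lcU: "locally_connected_space (subtopology X U)"
    and lcV: "locally_connected_space (subtopology Y V)"
    using locally_connected_space_prod_topology by blast+
  obtain C a' where C: "openin X C" "connectedin X C" "C \<subseteq> U" "a \<in> C" "a' \<in> C" "a' \<noteq> a"
    by (rule comp_open_nontriv[OF lcU UV(1) UV(3) nX])
  obtain D b' where D: "openin Y D" "connectedin Y D" "D \<subseteq> V" "b \<in> D" "b' \<in> D" "b' \<noteq> b"
    by (rule comp_open_nontriv[OF lcV UV(2) UV(4) nY])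
  define K where "K = C \<times> D"
  have KA: "K \<subseteq> A" unfolding K_def by (rule subset_trans[OF Sigma_mono[OF C(3) D(3)] UVA])
  have oK: "openin ?P K" unfolding K_def using C D by (simp add: openin_prod_Times_iff)
  have cK: "connectedin ?P (K - {(a,b)})" unfolding K_def
    by (rule prod_minus_point_connected) (use C D in auto)
  obtain h where h: "homeomorphic_map (subtopology ?P A) euclideanreal h"
    using hom homeomorphic_space by blast
  have KT: "K \<subseteq> topspace (subtopology ?P A)" using KA AT by auto
  have "openin (subtopology ?P A) K" using oK KA by (metis inf.absorb_iff2 openin_subtopology_Int2)
  then have oh: "open (h ` K)" using homeomorphic_map_openness[OF h KT] by simp
  have "connectedin (subtopology ?P A) (K - {(a,b)})"
    using cK KA connectedin_subtopology by blast
  then have "connected (h ` (K - {(a,b)}))"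
    using connectedin_continuous_map_image[OF homeomorphic_imp_continuous_map[OF h]] by simp
  moreover have inj: "inj_on h K" using h KT homeomorphic_imp_injective_map inj_on_subset by blast
  have abK: "(a,b) \<in> K" unfolding K_def using C D by auto
  have eq: "h ` (K - {(a,b)}) = h ` K - {h (a,b)}"
    using inj abK by (auto simp: inj_on_def)
  define t where "t = h (a,b)"
  have "t \<in> h ` K" using abK t_def by auto
  then obtain e where e: "e > 0" "ball t e \<subseteq> h ` K" using oh open_contains_ball by blast
  have "t - e/2 \<in> h ` K - {t}" "t + e/2 \<in> h ` K - {t}" using e by (auto simp: dist_real_def)
  moreover have "t \<notin> h ` K - {t}" by simp
  ultimately show False using \<open>connected (h ` (K - {(a,b)}))\<close> eq t_def
    unfolding connected_iff_interval
    by (smt (verit) e(1))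
qed

end
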